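(* Let $a(n,m,\Gamma_{sp})$ be the number of single-peaked $(n,m)$-elections on the candidate set $\{c_1,\ldots,c_m\}$. Then (i) $a(2,m,\Gamma_{sp})=m!\binom{2m-2}{m-1}$ for all $m\ge 1$; (ii) $a(n,3,\Gamma_{sp})=6\cdot 2^{n-1}(2^n-1)$ for all $n\ge 1$; (iii) $a(n,4,\Gamma_{sp})=24\cdot 4^{n-1}(2^{n+1}-3)$ for all $n\ge 1$.
   Context: An $(n,m)$-election $(C,\mathcal{P})$ is a set $C$ of $m$ candidates with an ordered $n$-tuple $\mathcal{P}=(V_1,\ldots,V_n)$ of total orders (votes) on $C$ (elections differing only in the order of votes are distinct). Given a total order $A$ on $C$ (an axis), a vote $V$ contains a valley with respect to $A$ on candidates $c_1,c_2,c_3$ if $c_2$ lies strictly between $c_1$ and $c_3$ in $A$ and $V$ ranks $c_2$ below both $c_1$ and $c_3$. The election is single-peaked with respect to $A$ if no vote contains a valley with respect to $A$, and single-peaked if it is single-peaked with respect to some total order $A$ on $C$. *)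

theory Defs
  imports Main
begin

text \<open>Total orders on C are relations r with linear_order_on C r (library notion, reflexive).
  For an axis A, (x,y) in A means x is at or left of y.\<close>

definition strictly_between :: "'a rel \<Rightarrow> 'a \<Rightarrow> 'a \<Rightarrow> 'a \<Rightarrow> bool" where
  "strictly_between A c1 c2 c3 \<longleftrightarrow>
     ((c1,c2) \<in> A \<and> c1 \<noteq> c2 \<and> (c2,c3) \<in> A \<and> c2 \<noteq> c3) \<or>
     ((c3,c2) \<in> A \<and> c3 \<noteq> c2 \<and> (c2,c1) \<in> A \<and> c2 \<noteq> c1)"

text \<open>Vote V: (x,y) \<in> V means x is ranked below or equal to y.\<close>
definition ranked_below :: "'a rel \<Rightarrow> 'a \<Rightarrow> 'a \<Rightarrow> bool" where
  "ranked_below V x y \<longleftrightarrow> (x,y) \<in> V \<and> x \<noteq> y"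

definition has_valley :: "'a rel \<Rightarrow> 'a rel \<Rightarrow> 'a \<Rightarrow> 'a \<Rightarrow> 'a \<Rightarrow> bool" where
  "has_valley A V c1 c2 c3 \<longleftrightarrow>
     strictly_between A c1 c2 c3 \<and> ranked_below V c2 c1 \<and> ranked_below V c2 c3"

definition single_peaked_wrt :: "'a set \<Rightarrow> 'a rel list \<Rightarrow> 'a rel \<Rightarrow> bool" where
  "single_peaked_wrt C P A \<longleftrightarrow>
     (\<forall>V \<in> set P. \<not> (\<exists>c1\<in>C. \<exists>c2\<in>C. \<exists>c3\<in>C. has_valley A V c1 c2 c3))"

definition single_peaked :: "'a set \<Rightarrow> 'a rel list \<Rightarrow> bool" where
  "single_peaked C P \<longleftrightarrow> (\<exists>A. linear_order_on C A \<and> single_peaked_wrt C P A)"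

definition elections :: "nat \<Rightarrow> 'a set \<Rightarrow> 'a rel list set" where
  "elections n C = {P. length P = n \<and> (\<forall>V \<in> set P. linear_order_on C V)}"

text \<open>Candidates c_1..c_m are represented as 1..m.\<close>
definition a_sp :: "nat \<Rightarrow> nat \<Rightarrow> nat" where
  "a_sp n m = card {P \<in> elections n {1..m}. single_peaked {1..m} P}"

end

theory Submission
  imports Defs "HOL-Combinatorics.Multiset_Permutations"
begin

fun before :: "'a list \<Rightarrow> 'a \<Rightarrow> 'a \<Rightarrow> bool" where
  "before [] a b = False"
| "before (x#xs) a b = ((a = x \<and> b \<in> set xs) \<or> before xs a b)"

lemma before_set: "before xs a b \<Longrightarrow> a \<in> set xs \<and> b \<in> set xs"
  by (induction xs) auto

lemma before_append: "before (xs @ ys) a b \<longleftrightarrow> before xs a b \<or> before ys a b \<or> (a \<in> set xs \<and> b \<in> set ys)"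
  by (induction xs) (auto dest: before_set)

lemma before_snoc: "before (xs @ [x]) a b \<longleftrightarrow> before xs a b \<or> (a \<in> set xs \<and> b = x)"
  by (simp add: before_append)

lemma before_rev: "before (rev xs) a b \<longleftrightarrow> before xs b a"
  by (induction xs) (auto simp: before_snoc)

lemma before_neq: "distinct xs \<Longrightarrow> before xs a b \<Longrightarrow> a \<noteq> b"
  by (induction xs) (auto dest: before_set)

lemma before_asym: "distinct xs \<Longrightarrow> before xs a b \<Longrightarrow> before xs b a \<Longrightarrow> False"
  by (induction xs) (auto dest: before_set)

lemma before_trans: "distinct xs \<Longrightarrow> before xs a b \<Longrightarrow> before xs b c \<Longrightarrow> before xs a c"
  by (induction xs) (auto dest: before_set)

lemma before_total: "a \<in> set xs \<Longrightarrow> b \<in> set xs \<Longrightarrow> a \<noteq> b \<Longrightarrow> before xs a b \<or> before xs b a"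
  by (induction xs) auto

definition rel_of :: "'a list \<Rightarrow> 'a rel" where
  "rel_of xs = {(a,b). (a = b \<and> a \<in> set xs) \<or> before xs a b}"

definition perms :: "'a set \<Rightarrow> 'a list set" where
  "perms C = {xs. distinct xs \<and> set xs = C}"

lemma linear_rel_of: "distinct xs \<Longrightarrow> linear_order_on (set xs) (rel_of xs)"
  unfolding linear_order_on_def partial_order_on_def preorder_on_def rel_of_def
    refl_on_def trans_def antisym_on_def total_on_def
  by (auto dest: before_set before_asym before_trans before_total)

lemma rel_of_Cons: "rel_of (x#xs) = {(x,b) | b. b \<in> insert x (set xs)} \<union> rel_of xs"
  unfolding rel_of_def by auto

lemma rel_of_snoc: "rel_of (xs@[x]) = rel_of xs \<union> {(a,x) | a. a \<in> insert x (set xs)}"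
  unfolding rel_of_def by (auto simp: before_snoc)

lemma rel_of_mem: "(a,b) \<in> rel_of xs \<Longrightarrow> a \<in> set xs \<and> b \<in> set xs"
  unfolding rel_of_def by (auto dest: before_set)

lemma rel_of_refl: "a \<in> set xs \<Longrightarrow> (a,a) \<in> rel_of xs"
  unfolding rel_of_def by auto

lemma rel_of_set_eq: "rel_of xs = rel_of ys \<Longrightarrow> set xs = set ys"
  by (metis rel_of_mem rel_of_refl subsetI subset_antisym)

lemma rel_of_inj: "distinct xs \<Longrightarrow> distinct ys \<Longrightarrow> rel_of xs = rel_of ys \<Longrightarrow> xs = ys"
proof (induction xs arbitrary: ys)
  case Nil
  then show ?case unfolding rel_of_def by (cases ys) auto
next
  case (Cons x xs)
  then obtain y ys' where ys: "ys = y # ys'"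
    by (cases ys) (auto simp: rel_of_def)
  have xy: "x = y"
  proof (rule ccontr)
    assume "x \<noteq> y"
    have "y \<in> set (x#xs)" using rel_of_set_eq[OF Cons.prems(3)] ys by simp
    hence "y \<in> set xs" using \<open>x \<noteq> y\<close> by simp
    have "x \<in> set ys" using rel_of_set_eq[OF Cons.prems(3)] by (metis list.set_intros(1))
    hence "(y,x) \<in> rel_of ys" using ys by (auto simp: rel_of_def)
    hence "(y,x) \<in> rel_of (x#xs)" using Cons.prems(3) by simp
    hence b1: "before (x#xs) y x" using \<open>x \<noteq> y\<close> by (simp add: rel_of_def)
    have b2: "before (x#xs) x y" using \<open>y \<in> set xs\<close> by simp
    show False by (rule before_asym[OF Cons.prems(1) b2 b1])
  qed
  have "rel_of xs = rel_of (x#xs) - {p. fst p = x}"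
    using Cons.prems(1) by (auto simp: rel_of_def dest: before_set)
  moreover have "rel_of ys' = rel_of ys - {p. fst p = x}"
    using Cons.prems(2) ys xy by (auto simp: rel_of_def dest: before_set)
  ultimately have "rel_of xs = rel_of ys'" using Cons.prems(3) by simp
  then show ?case using Cons ys xy by auto
qed

lemma finite_lin_max:
  assumes "finite C" "C \<noteq> {}" "total_on C V" "refl_on C V" "trans V"
  shows "\<exists>b\<in>C. \<forall>a\<in>C. (a,b) \<in> V"
  using assms
proof (induction C rule: finite_ne_induct)
  case (singleton x)
  then show ?case by (auto simp: refl_on_def)
next
  case (insert x F)
  have "total_on F V" "refl_on F V" using insert.prems by (auto simp: total_on_def refl_on_def)
  then obtain b where b: "b \<in> F" "\<forall>a\<in>F. (a,b) \<in> V" using insert by blast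
  show ?case
  proof (cases "(b,x) \<in> V")
    case True
    then show ?thesis using b insert.prems unfolding trans_def refl_on_def by blast
  next
    case False
    have "x \<noteq> b" using b insert.hyps by auto
    then have "(x,b) \<in> V" using False insert.prems b unfolding total_on_def by (meson insertCI)
    then show ?thesis using b by blast
  qed
qed

lemma lin_list:
  assumes "finite C" "linear_order_on C V"
  shows "\<exists>xs. distinct xs \<and> set xs = C \<and> V = rel_of xs"
  using assms
proof (induction "card C" arbitrary: C V)
  case 0
  then have "C = {}" by simp
  then have "V = {}" using 0 by (auto simp: linear_order_on_def partial_order_on_def preorder_on_def)
  then show ?case using \<open>C = {}\<close> by (auto simp: rel_of_def)
next
  case (Suc n)
  then have "C \<noteq> {}" by auto
  have lo: "V \<subseteq> C \<times> C" "refl_on C V" "trans V" "antisym V" "total_on C V"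
    using Suc.prems by (auto simp: linear_order_on_def partial_order_on_def preorder_on_def)
  obtain b where b: "b \<in> C" "\<forall>a\<in>C. (a,b) \<in> V"
    using finite_lin_max[OF Suc.prems(1) \<open>C \<noteq> {}\<close>] lo by blast
  define V' where "V' = V \<inter> ((C-{b}) \<times> (C-{b}))"
  have "linear_order_on (C-{b}) V'"
    using lo unfolding V'_def linear_order_on_def partial_order_on_def preorder_on_def
      refl_on_def trans_def antisym_on_def total_on_def by blast
  moreover have "n = card (C-{b})" using Suc b by simp
  ultimately obtain xs where xs: "distinct xs" "set xs = C - {b}" "V' = rel_of xs"
    using Suc by (metis finite_Diff)
  have "V = rel_of (xs @ [b])"
  proof -
    have "V = V' \<union> {(a,b) | a. a \<in> C}"
    proof (intro set_eqI iffI)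
      fix p assume "p \<in> V"
      then obtain a c where p: "p = (a,c)" "a \<in> C" "c \<in> C" using lo(1) by blast
      show "p \<in> V' \<union> {(a,b) | a. a \<in> C}"
      proof (cases "c = b")
        case False
        have "a \<noteq> b"
        proof
          assume "a = b"
          then have "(c,b) \<in> V" "(b,c) \<in> V" using b p \<open>p \<in> V\<close> by auto
          then show False using lo(4) False unfolding antisym_on_def by blast
        qed
        then show ?thesis using False p \<open>p \<in> V\<close> unfolding V'_def by auto
      qed (use p in auto)
    qed (use b V'_def in auto)
    then show ?thesis using xs b by (auto simp: rel_of_snoc)
  qed
  then show ?case using xs b by (intro exI[of _ "xs@[b]"]) auto
qed

fun peel :: "'a list \<Rightarrow> 'a list \<Rightarrow> bool" where
  "peel [] A = (A = [])"
| "peel (x#v) A = (A \<noteq> [] \<and> ((hd A = x \<and> peel v (tl A)) \<or> (last A = x \<and> peel v (butlast A))))"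

lemma peel_Cons_ex: "peel (x#v) A \<longleftrightarrow> (\<exists>A'. (A = x#A' \<or> A = A'@[x]) \<and> peel v A')"
proof
  assume "peel (x#v) A"
  then show "\<exists>A'. (A = x#A' \<or> A = A'@[x]) \<and> peel v A'"
    by (metis append_butlast_last_id list.collapse peel.simps(2))
next
  assume "\<exists>A'. (A = x#A' \<or> A = A'@[x]) \<and> peel v A'"
  then show "peel (x#v) A" by auto
qed

lemma peel_set: "peel v A \<Longrightarrow> set A = set v \<and> length A = length v"
proof (induction v arbitrary: A)
  case Nil then show ?case by simp
next
  case (Cons x v)
  then obtain A' where "A = x#A' \<or> A = A'@[x]" "peel v A'" using peel_Cons_ex by metis
  then show ?case using Cons.IH by auto
qed

lemma peel_rev: "peel v (rev A) \<longleftrightarrow> peel v A"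
proof (induction v arbitrary: A)
  case Nil then show ?case by simp
next
  case (Cons x v)
  show ?case
  proof
    assume "peel (x # v) (rev A)"
    then obtain A' where "rev A = x#A' \<or> rev A = A'@[x]" "peel v A'" using peel_Cons_ex by metis
    then have "A = rev A' @ [x] \<or> A = x # rev A'" "peel v (rev A')"
      using Cons.IH[of "rev A'"] by (auto simp: rev_swap)
    then show "peel (x#v) A" using peel_Cons_ex by metis
  next
    assume "peel (x # v) A"
    then obtain A' where "A = x#A' \<or> A = A'@[x]" "peel v A'" using peel_Cons_ex by metis
    then have "rev A = rev A' @ [x] \<or> rev A = x # rev A'" "peel v (rev A')"
      using Cons.IH[of A'] by auto
    then show "peel (x#v) (rev A)" using peel_Cons_ex by metis
  qed
qed

definition nov :: "'a list \<Rightarrow> 'a list \<Rightarrow> bool" where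
  "nov v A \<longleftrightarrow> (\<forall>c1 c2 c3. \<not> ((before A c1 c2 \<and> before A c2 c3 \<or> before A c3 c2 \<and> before A c2 c1)
       \<and> before v c2 c1 \<and> before v c2 c3))"

lemma nov_peel: "distinct v \<Longrightarrow> distinct A \<Longrightarrow> set v = set A \<Longrightarrow> nov v A \<longleftrightarrow> peel v A"
proof (induction v arbitrary: A)
  case Nil
  then show ?case by (simp add: nov_def)
next
  case (Cons x v)
  have xA: "x \<in> set A" using Cons.prems by auto
  show ?case
  proof
    assume nv: "nov (x#v) A"
    have "\<exists>A'. A = x#A' \<or> A = A'@[x]"
    proof -
      obtain u w where A: "A = u @ x # w" using split_list[OF xA] by blast
      show ?thesis
      proof (cases "u = [] \<or> w = []")
        case True
        then show ?thesis using A by auto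
      next
        case False
        define c1 where "c1 = last u"
        define c3 where "c3 = hd w"
        have c1u: "c1 \<in> set u" using False c1_def by auto
        have c3w: "c3 \<in> set w" using False c3_def by auto
        have "before A c1 x" using A c1u by (simp add: before_append)
        moreover have "before A x c3" using A c3w by (simp add: before_append)
        moreover have "c1 \<in> set v" "c3 \<in> set v"
          using Cons.prems A c1u c3w by auto
        ultimately show ?thesis using nv unfolding nov_def by auto
      qed
    qed
    then obtain A' where A': "A = x#A' \<or> A = A'@[x]" by blast
    have dA': "distinct A'" "set v = set A'" using A' Cons.prems by auto
    have "nov v A'"
      unfolding nov_def
    proof (intro allI notI)
      fix c1 c2 c3
      assume "(before A' c1 c2 \<and> before A' c2 c3 \<or> before A' c3 c2 \<and> before A' c2 c1)
         \<and> before v c2 c1 \<and> before v c2 c3"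
      then have "(before A c1 c2 \<and> before A c2 c3 \<or> before A c3 c2 \<and> before A c2 c1)
         \<and> before (x#v) c2 c1 \<and> before (x#v) c2 c3"
        using A' by (auto simp: before_snoc)
      then show False using nv unfolding nov_def by blast
    qed
    then have "peel v A'" using Cons.IH[of A'] dA' Cons.prems(1) by auto
    then show "peel (x#v) A" using A' peel_Cons_ex by metis
  next
    assume "peel (x#v) A"
    then obtain A' where A': "A = x#A' \<or> A = A'@[x]" "peel v A'" using peel_Cons_ex by metis
    have dA': "distinct A'" "set v = set A'" using A' Cons.prems by auto
    then have nv: "nov v A'" using Cons.IH[of A'] A'(2) Cons.prems(1) by auto
    have xv: "x \<notin> set v" "x \<notin> set A'" using Cons.prems dA' by auto
    show "nov (x#v) A"
      unfolding nov_def
    proof (intro allI notI)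
      fix c1 c2 c3
      assume H: "(before A c1 c2 \<and> before A c2 c3 \<or> before A c3 c2 \<and> before A c2 c1)
         \<and> before (x#v) c2 c1 \<and> before (x#v) c2 c3"
      show False
      proof (cases "c2 = x")
        case True
        then show ?thesis using H A'(1) xv by (auto simp: before_snoc dest: before_set)
      next
        case False
        then have "before v c2 c1" "before v c2 c3" using H by auto
        then have "c1 \<noteq> x" "c3 \<noteq> x" using xv by (auto dest: before_set)
        then have "(before A' c1 c2 \<and> before A' c2 c3 \<or> before A' c3 c2 \<and> before A' c2 c1)"
          using H A'(1) False by (auto simp: before_snoc)
        then show False using nv \<open>before v c2 c1\<close> \<open>before v c2 c3\<close> unfolding nov_def by blast
      qed
    qed
  qed
qed

lemma rel_of_strict: "distinct xs \<Longrightarrow> ((a,b) \<in> rel_of xs \<and> a \<noteq> b) \<longleftrightarrow> before xs a b"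
  unfolding rel_of_def by (auto dest: before_neq)

lemma has_valley_before:
  assumes "distinct v" "distinct as"
  shows "has_valley (rel_of as) (rel_of v) c1 c2 c3 \<longleftrightarrow>
     (before as c1 c2 \<and> before as c2 c3 \<or> before as c3 c2 \<and> before as c2 c1)
       \<and> before v c2 c1 \<and> before v c2 c3"
proof -
  have e1: "\<And>a b. ((a,b) \<in> rel_of as \<and> a \<noteq> b) = before as a b" using rel_of_strict[OF assms(2)] by blast
  have e2: "\<And>a b. ((a,b) \<in> rel_of v \<and> a \<noteq> b) = before v a b" using rel_of_strict[OF assms(1)] by blast
  show ?thesis unfolding has_valley_def strictly_between_def ranked_below_def using e1 e2 by blast
qed

lemma valley_iff:
  assumes "v \<in> perms C" "as \<in> perms C"
  shows "(\<exists>c1\<in>C. \<exists>c2\<in>C. \<exists>c3\<in>C. has_valley (rel_of as) (rel_of v) c1 c2 c3) \<longleftrightarrow> \<not> peel v as"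
proof -
  have d: "distinct v" "distinct as" "set v = C" "set as = C" using assms by (auto simp: perms_def)
  have "(\<exists>c1\<in>C. \<exists>c2\<in>C. \<exists>c3\<in>C. has_valley (rel_of as) (rel_of v) c1 c2 c3) \<longleftrightarrow> \<not> nov v as"
    unfolding has_valley_before[OF d(1,2)] nov_def
    using d by (auto dest: before_set) (blast dest: before_set)+
  then show ?thesis using nov_peel d by metis
qed

definition cnt :: "'a set \<Rightarrow> nat \<Rightarrow> nat" where
  "cnt C n = card {Ps. length Ps = n \<and> set Ps \<subseteq> perms C \<and> (\<exists>A\<in>perms C. \<forall>v\<in>set Ps. peel v A)}"

lemma perms_rel_linear: "v \<in> perms C \<Longrightarrow> linear_order_on C (rel_of v)"
  using linear_rel_of by (force simp: perms_def)

lemma lin_perm: "finite C \<Longrightarrow> linear_order_on C V \<Longrightarrow> \<exists>v\<in>perms C. V = rel_of v"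
  using lin_list by (fastforce simp: perms_def)

lemma inj_rel_of: "inj_on rel_of (perms C)"
  by (rule inj_onI) (auto simp: perms_def intro: rel_of_inj)

lemma bridge:
  assumes fin: "finite C"
  shows "card {P \<in> elections n C. single_peaked C P} = cnt C n"
proof -
  define X where "X = {Ps. length Ps = n \<and> set Ps \<subseteq> perms C \<and> (\<exists>A\<in>perms C. \<forall>v\<in>set Ps. peel v A)}"
  have inj: "inj_on (map rel_of) X"
  proof (rule inj_onI)
    fix Ps Qs assume "Ps \<in> X" "Qs \<in> X" "map rel_of Ps = map rel_of Qs"
    moreover have "inj_on rel_of (set Ps \<union> set Qs)"
    proof (rule inj_on_subset[OF inj_rel_of])
      show "set Ps \<union> set Qs \<subseteq> perms C" using \<open>Ps \<in> X\<close> \<open>Qs \<in> X\<close> unfolding X_def by auto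
    qed
    ultimately show "Ps = Qs" using map_inj_on by blast
  qed
  have eq: "{P \<in> elections n C. single_peaked C P} = map rel_of ` X"
  proof (intro set_eqI iffI)
    fix P assume "P \<in> {P \<in> elections n C. single_peaked C P}"
    then have P: "length P = n" "\<forall>V\<in>set P. linear_order_on C V" "single_peaked C P"
      by (auto simp: elections_def)
    obtain A where A: "linear_order_on C A" "single_peaked_wrt C P A"
      using P(3) unfolding single_peaked_def by blast
    obtain as where as: "as \<in> perms C" "A = rel_of as" using lin_perm[OF fin A(1)] by blast
    define sel where "sel V = (SOME v. v \<in> perms C \<and> V = rel_of v)" for V
    have sel: "sel V \<in> perms C \<and> V = rel_of (sel V)" if "V \<in> set P" for V
      unfolding sel_def by (rule someI_ex) (use lin_perm[OF fin] P(2) that in blast)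
    have sel_in: "sel V \<in> perms C" and sel_eq: "rel_of (sel V) = V" if "V \<in> set P" for V
      using sel[OF that] by auto
    define Ps where "Ps = map sel P"
    have "map rel_of Ps = P" unfolding Ps_def map_map by (rule map_idI) (use sel_eq in auto)
    moreover have "Ps \<in> X"
    proof -
      have "\<forall>v\<in>set Ps. peel v as"
      proof
        fix v assume "v \<in> set Ps"
        then obtain V where V: "V \<in> set P" "v = sel V" unfolding Ps_def by auto
        have "\<not> (\<exists>c1\<in>C. \<exists>c2\<in>C. \<exists>c3\<in>C. has_valley A V c1 c2 c3)"
          using A(2) V(1) unfolding single_peaked_wrt_def by blast
        moreover have "v \<in> perms C" "V = rel_of v" using sel_in[OF V(1)] sel_eq[OF V(1)] V(2) by auto
        ultimately show "peel v as" using valley_iff[OF _ as(1)] as(2) by blast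
      qed
      moreover have "set Ps \<subseteq> perms C" unfolding Ps_def using sel_in by auto
      ultimately show ?thesis unfolding X_def using P(1) as(1) Ps_def by auto
    qed
    ultimately show "P \<in> map rel_of ` X" by blast
  next
    fix P assume "P \<in> map rel_of ` X"
    then obtain Ps where PsX: "Ps \<in> X" and PP: "P = map rel_of Ps" by blast
    have Ps: "length Ps = n" "set Ps \<subseteq> perms C" and "\<exists>as\<in>perms C. \<forall>v\<in>set Ps. peel v as"
      using PsX unfolding X_def by auto
    then obtain as where as: "as \<in> perms C" "\<forall>v\<in>set Ps. peel v as" by blast
    have "\<forall>V\<in>set P. linear_order_on C V"
    proof
      fix V assume "V \<in> set P"
      then obtain v where "v \<in> set Ps" "V = rel_of v" using PP by auto
      then show "linear_order_on C V" using perms_rel_linear Ps(2) by blast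
    qed
    then have "P \<in> elections n C"
      using Ps(1) PP unfolding elections_def by simp
    moreover have "single_peaked_wrt C P (rel_of as)"
      unfolding single_peaked_wrt_def
    proof
      fix V assume "V \<in> set P"
      then obtain v where v: "v \<in> set Ps" "V = rel_of v" using PP by auto
      have "v \<in> perms C" "peel v as" using v(1) Ps(2) as(2) by auto
      then show "\<not> (\<exists>c1\<in>C. \<exists>c2\<in>C. \<exists>c3\<in>C. has_valley (rel_of as) V c1 c2 c3)"
        using valley_iff[OF _ as(1)] v(2) by blast
    qed
    moreover have "linear_order_on C (rel_of as)" using perms_rel_linear[OF as(1)] .
    ultimately show "P \<in> {P \<in> elections n C. single_peaked C P}"
      unfolding single_peaked_def by blast
  qed
  show ?thesis unfolding cnt_def X_def[symmetric] eq using card_image[OF inj] by simp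
qed

definition F :: "'a list list \<Rightarrow> 'a list list \<Rightarrow> nat \<Rightarrow> nat" where
  "F Pl T n = card {Ps. length Ps = n \<and> set Ps \<subseteq> set Pl \<and> (\<exists>A\<in>set T. \<forall>v\<in>set Ps. peel v A)}"

lemma F0: "F Pl T 0 = (if T = [] then 0 else 1)"
proof -
  have "{Ps. length Ps = 0 \<and> set Ps \<subseteq> set Pl \<and> (\<exists>A\<in>set T. \<forall>v\<in>set Ps. peel v A)}
        = (if T = [] then {} else {[]})" by (cases T) auto
  then show ?thesis unfolding F_def by simp
qed

lemma Fstep:
  assumes "distinct Pl"
  shows "F Pl T (Suc n) = (\<Sum>v\<leftarrow>Pl. F Pl (filter (peel v) T) n)"
proof -
  define S where "S T' = {Ps. length Ps = n \<and> set Ps \<subseteq> set Pl \<and> (\<exists>A\<in>set T'. \<forall>v\<in>set Ps. peel v A)}" for T'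
  have fin: "finite (S T')" for T'
    by (rule finite_subset[OF _ finite_lists_length_eq[of "set Pl" n]]) (auto simp: S_def)
  have eq: "{Ps. length Ps = Suc n \<and> set Ps \<subseteq> set Pl \<and> (\<exists>A\<in>set T. \<forall>v\<in>set Ps. peel v A)}
      = (\<Union>v\<in>set Pl. (Cons v) ` S (filter (peel v) T))"
  proof (intro set_eqI iffI)
    fix Ps assume "Ps \<in> {Ps. length Ps = Suc n \<and> set Ps \<subseteq> set Pl \<and> (\<exists>A\<in>set T. \<forall>v\<in>set Ps. peel v A)}"
    then obtain v Qs where "Ps = v # Qs" "length Qs = n" "v \<in> set Pl" "set Qs \<subseteq> set Pl"
      "\<exists>A\<in>set T. peel v A \<and> (\<forall>u\<in>set Qs. peel u A)"
      by (cases Ps) auto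
    then show "Ps \<in> (\<Union>v\<in>set Pl. (Cons v) ` S (filter (peel v) T))"
      unfolding S_def by auto
  next
    fix Ps assume "Ps \<in> (\<Union>v\<in>set Pl. (Cons v) ` S (filter (peel v) T))"
    then show "Ps \<in> {Ps. length Ps = Suc n \<and> set Ps \<subseteq> set Pl \<and> (\<exists>A\<in>set T. \<forall>v\<in>set Ps. peel v A)}"
      unfolding S_def by auto
  qed
  have "F Pl T (Suc n) = card (\<Union>v\<in>set Pl. (Cons v) ` S (filter (peel v) T))"
    unfolding F_def eq ..
  also have "\<dots> = (\<Sum>v\<in>set Pl. card ((Cons v) ` S (filter (peel v) T)))"
    by (rule card_UN_disjoint) (auto simp: fin)
  also have "\<dots> = (\<Sum>v\<in>set Pl. card (S (filter (peel v) T)))"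
    by (rule sum.cong) (auto intro: card_image simp: inj_on_def)
  also have "\<dots> = (\<Sum>v\<leftarrow>Pl. F Pl (filter (peel v) T) n)"
    using assms by (simp add: sum_list_distinct_conv_sum_set F_def S_def)
  finally show ?thesis .
qed

lemma cnt_F: "set Pl = perms C \<Longrightarrow> cnt C n = F Pl Pl n"
  unfolding cnt_def F_def by simp

lemma F_closed:
  fixes a b :: "nat \<Rightarrow> int" and R :: "'a list list list" and Pl :: "'a list list" and k :: int
  assumes "distinct Pl"
    and C0: "\<forall>T\<in>set R. a (length T) - b (length T) = (if T = [] then 0 else 1)"
    and C1: "\<forall>T\<in>set R. \<forall>v\<in>set Pl. filter (peel v) T \<in> set R"
    and C2: "\<forall>T\<in>set R. (\<Sum>v\<leftarrow>Pl. a (length (filter (peel v) T))) = 2 * k * a (length T)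
                       \<and> (\<Sum>v\<leftarrow>Pl. b (length (filter (peel v) T))) = k * b (length T)"
  shows "\<forall>T\<in>set R. int (F Pl T n) = a (length T) * (2*k)^n - b (length T) * k^n"
proof (induction n)
  case 0
  then show ?case using C0 by (simp add: F0)
next
  case (Suc n)
  show ?case
  proof
    fix T assume T: "T \<in> set R"
    have "int (F Pl T (Suc n)) = (\<Sum>v\<leftarrow>Pl. int (F Pl (filter (peel v) T) n))"
      by (simp add: Fstep[OF assms(1)] sum_list_of_nat[symmetric] o_def)
    also have "\<dots> = (\<Sum>v\<leftarrow>Pl. a (length (filter (peel v) T)) * (2*k)^n - b (length (filter (peel v) T)) * k^n)"
      using Suc.IH C1 T by (intro arg_cong[where f=sum_list] map_cong) auto
    also have "\<dots> = (\<Sum>v\<leftarrow>Pl. a (length (filter (peel v) T))) * (2*k)^n - (\<Sum>v\<leftarrow>Pl. b (length (filter (peel v) T))) * k^n"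
      by (simp add: sum_list_subtractf sum_list_mult_const)
    also have "\<dots> = a (length T) * (2*k)^Suc n - b (length T) * k^Suc n"
      using C2 T by simp
    finally show "int (F Pl T (Suc n)) = a (length T) * (2*k)^Suc n - b (length T) * k^Suc n" .
  qed
qed

definition H :: "nat \<Rightarrow> nat \<Rightarrow> nat" where
  "H K a = (\<Sum>j\<le>a. (2*K+a) choose (K+j))"

definition Scl :: "nat \<Rightarrow> nat \<Rightarrow> nat" where
  "Scl m a = (if m \<le> a then 2^(m-1) else H (m-1-a) a)"

lemma H0: "H 0 a = 2^a"
  by (simp add: H_def choose_row_sum)

lemma Hpascal: "H (Suc K) (Suc a) = H K (a+2) + H (Suc K) a"
proof -
  define N where "N = 2*K+a+2"
  define t where "t = N choose Suc (K + Suc a)"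
  have "H (Suc K) (Suc a) = (\<Sum>j\<le>Suc a. Suc N choose Suc (K+j))"
    unfolding H_def by (rule sum.cong) (simp_all add: N_def del: binomial_Suc_Suc)
  also have "\<dots> = (\<Sum>j\<le>Suc a. N choose (K+j)) + (\<Sum>j\<le>Suc a. N choose Suc (K+j))"
    by (simp add: sum.distrib)
  finally have 1: "H (Suc K) (Suc a) = (\<Sum>j\<le>Suc a. N choose (K+j)) + (\<Sum>j\<le>Suc a. N choose Suc (K+j))" .
  have "H K (a+2) = (\<Sum>j\<le>Suc (Suc a). N choose (K+j))"
    unfolding H_def by (rule sum.cong) (simp_all add: N_def del: binomial_Suc_Suc)
  also have "\<dots> = (\<Sum>j\<le>Suc a. N choose (K+j)) + t"
    by (simp only: sum.atMost_Suc t_def) simp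
  finally have 2: "H K (a+2) = (\<Sum>j\<le>Suc a. N choose (K+j)) + t" .
  have "(\<Sum>j\<le>Suc a. N choose Suc (K+j)) = (\<Sum>j\<le>a. N choose Suc (K+j)) + t"
    by (simp only: sum.atMost_Suc t_def)
  also have "(\<Sum>j\<le>a. N choose Suc (K+j)) = H (Suc K) a"
    unfolding H_def by (rule sum.cong) (simp_all add: N_def del: binomial_Suc_Suc)
  finally have 3: "(\<Sum>j\<le>Suc a. N choose Suc (K+j)) = H (Suc K) a + t" .
  show ?thesis using 1 2 3 by simp
qed

lemma Rec_aux:
  assumes "1 \<le> a" "a \<le> m"
  shows "Scl (Suc m) a = Scl m (a-1) + (\<Sum>p\<in>{a..m}. Scl m p)"
  using assms
proof (induction "m - a" arbitrary: a)
  case 0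
  then have am: "a = m" by simp
  have p: "(2::nat)^m = 2^(m-1) + 2^(m-1)" using 0 am by (cases m) auto
  have "Scl (Suc m) m = 2^m" by (simp add: Scl_def H0)
  moreover have "Scl m (m-1) = 2^(m-1)" using 0 am by (simp add: Scl_def H0)
  moreover have "Scl m m = 2^(m-1)" by (simp add: Scl_def)
  ultimately show ?case using am p by simp
next
  case (Suc d)
  then have am: "a < m" by simp
  have IH: "Scl (Suc m) (Suc a) = Scl m a + (\<Sum>p\<in>{Suc a..m}. Scl m p)"
    using Suc.hyps(1)[of "Suc a"] Suc.hyps(2) am by simp
  have "(\<Sum>p\<in>{a..m}. Scl m p) = Scl m a + (\<Sum>p\<in>{Suc a..m}. Scl m p)"
    using am by (simp add: sum.atLeast_Suc_atMost)
  moreover have "Scl (Suc m) a = Scl m (a-1) + Scl (Suc m) (Suc a)"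
  proof -
    obtain K where K: "m - a = Suc K" using am by (cases "m - a") auto
    obtain a' where a': "a = Suc a'" using Suc.prems(1) by (cases a) auto
    have "Scl (Suc m) a = H (Suc K) (Suc a')" using K a' am by (simp add: Scl_def)
    moreover have "Scl m (a-1) = H (Suc K) a'" using K a' am by (simp add: Scl_def)
    moreover have "Scl (Suc m) (Suc a) = H K (a'+2)"
    proof -
      have K2: "m - Suc (Suc a') = K" using K a' by arith
      then show ?thesis using a' am by (simp add: Scl_def)
    qed
    ultimately show ?thesis using Hpascal by simp
  qed
  ultimately show ?case using IH by simp
qed

lemma Rec:
  assumes "1 \<le> m" "1 \<le> a" "a \<le> Suc m"
  shows "Scl (Suc m) a = Scl m (a-1) + (\<Sum>p\<in>{1..m}. if a \<le> p \<or> (a = Suc m \<and> p = m) then Scl m p else 0)"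
proof (cases "a = Suc m")
  case True
  have "(\<Sum>p\<in>{1..m}. if a \<le> p \<or> (a = Suc m \<and> p = m) then Scl m p else 0) = (\<Sum>p\<in>{m}. Scl m p)"
    using True assms by (intro sum.mono_neutral_cong_right) auto
  moreover have "(2::nat)^m = 2^(m-1) + 2^(m-1)" using assms by (cases m) auto
  ultimately show ?thesis using True assms by (simp add: Scl_def)
next
  case False
  then have am: "a \<le> m" using assms by simp
  have "(\<Sum>p\<in>{1..m}. if a \<le> p \<or> (a = Suc m \<and> p = m) then Scl m p else 0) = (\<Sum>p\<in>{a..m}. Scl m p)"
    using False assms by (intro sum.mono_neutral_cong_right) auto
  then show ?thesis using Rec_aux[OF assms(2) am] by simp
qed

lemma Scl01: "1 \<le> m \<Longrightarrow> Scl m 0 = Scl m 1"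
proof (cases "m = 1")
  case True then show ?thesis by (simp add: Scl_def H_def)
next
  case False
  assume "1 \<le> m"
  then obtain K where K: "m = Suc (Suc K)" using False by (cases m; cases "m - 1") auto
  have "Scl m 0 = (2*K+2) choose (K+1)" using K by (simp add: Scl_def H_def)
  moreover have "Scl m 1 = ((2*K+1) choose K) + ((2*K+1) choose (K+1))" using K by (simp add: Scl_def H_def)
  ultimately show ?thesis by simp
qed

lemma Scl0: "1 \<le> m \<Longrightarrow> Scl m 0 = (2*m-2) choose (m-1)"
  by (cases m) (simp_all add: Scl_def H_def)

definition ins :: "nat \<Rightarrow> 'a \<Rightarrow> 'a list \<Rightarrow> 'a list" where
  "ins p x ys = take p ys @ x # drop p ys"

definition E :: "'a set \<Rightarrow> nat \<Rightarrow> 'a list \<Rightarrow> 'a list \<Rightarrow> bool" where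
  "E C a v1 v2 \<longleftrightarrow> (\<exists>A\<in>perms C. peel v1 A \<and> peel v2 A \<and> take a v2 = take a (rev A))"

definition PP :: "'a set \<Rightarrow> nat \<Rightarrow> ('a list \<times> 'a list) set" where
  "PP C a = {(v1,v2). v1 \<in> perms C \<and> v2 \<in> perms C \<and> E C a v1 v2}"

lemma L1:
  assumes "x \<notin> set A'" "distinct A'" "x \<notin> set u"
  shows "peel (u @ x # w) (x # A') \<longleftrightarrow> (u = take (length u) (rev A') \<and> peel (u @ w) A')"
  using assms
proof (induction u arbitrary: A')
  case Nil
  show ?case
  proof (cases "A' = []")
    case True then show ?thesis by simp
  next
    case False
    then have "last (x#A') \<noteq> x" using Nil.prems by auto
    then show ?thesis by simp
  qed
next
  case (Cons y u)
  have yx: "y \<noteq> x" using Cons.prems by auto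
  show ?case
  proof (cases "A' = []")
    case True then show ?thesis using yx by simp
  next
    case False
    then obtain B z where A': "A' = B @ [z]" by (metis rev_exhaust)
    have zB: "z \<notin> set B" "x \<notin> set B" "distinct B" "x \<noteq> z" using Cons.prems A' by auto
    have IH: "peel (u @ x # w) (x # B) \<longleftrightarrow> (u = take (length u) (rev B) \<and> peel (u @ w) B)"
      using Cons.IH[of B] zB Cons.prems by auto
    have lhs: "peel ((y # u) @ x # w) (x # A') \<longleftrightarrow> (z = y \<and> peel (u @ x # w) (x # B))"
      using yx A' by simp
    have rhs1: "(y # u = take (length (y#u)) (rev A')) \<longleftrightarrow> (y = z \<and> u = take (length u) (rev B))"
      using A' by simp
    have rhs2: "y = z \<Longrightarrow> peel ((y # u) @ w) A' \<longleftrightarrow> peel (u @ w) B"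
    proof -
      assume yz: "y = z"
      show ?thesis
      proof (cases "B = []")
        case True then show ?thesis using A' yz by simp
      next
        case False
        then have "hd (B @ [z]) \<noteq> y" using zB yz by (cases B) auto
        then show ?thesis using A' yz False by simp
      qed
    qed
    show ?thesis using lhs rhs1 rhs2 IH by blast
  qed
qed

lemma L2:
  assumes "x \<notin> set A'" "distinct A'" "x \<notin> set u"
  shows "peel (u @ x # w) (A' @ [x]) \<longleftrightarrow> (u = take (length u) A' \<and> peel (u @ w) A')"
proof -
  have "peel (u @ x # w) (A' @ [x]) \<longleftrightarrow> peel (u @ x # w) (x # rev A')"
    using peel_rev[of "u @ x # w" "x # rev A'"] by simp
  also have "\<dots> \<longleftrightarrow> (u = take (length u) A' \<and> peel (u @ w) (rev A'))"
    using L1[of x "rev A'" u w] assms by simp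
  also have "\<dots> \<longleftrightarrow> (u = take (length u) A' \<and> peel (u @ w) A')"
    using peel_rev by metis
  finally show ?thesis .
qed

lemma perms_length: "finite C \<Longrightarrow> v \<in> perms C \<Longrightarrow> length v = card C"
  unfolding perms_def by (auto simp: distinct_card)

lemma Dec:
  assumes x: "x \<notin> C'" and fin: "finite C'" and cm: "card C' = m" and m1: "1 \<le> m"
    and a: "1 \<le> a" "a \<le> Suc m" and v1: "v1 \<in> perms C'" and v2: "v2 \<in> perms C'" and p: "p \<le> m"
  shows "E (insert x C') a (x#v1) (ins p x v2) \<longleftrightarrow>
     (p = 0 \<and> E C' (a-1) v1 v2) \<or> (1 \<le> p \<and> (a \<le> p \<or> (a = Suc m \<and> p = m)) \<and> E C' p v1 v2)"
proof -
  define u where "u = take p v2"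
  define w where "w = drop p v2"
  have lv2: "length v2 = m" using perms_length[OF fin v2] cm by simp
  have lu: "length u = p" using lv2 p u_def by simp
  have uw: "u @ w = v2" using u_def w_def by simp
  have xuw: "x \<notin> set u" "x \<notin> set w" using x v2 uw unfolding perms_def by auto
  have ins: "ins p x v2 = u @ x # w" unfolding ins_def u_def w_def ..
  have setv2: "set v2 = C'" "distinct v2" using v2 unfolding perms_def by auto
  show ?thesis
  proof
    assume "E (insert x C') a (x#v1) (ins p x v2)"
    then obtain A where A: "A \<in> perms (insert x C')" "peel (x#v1) A" "peel (u @ x # w) A"
        "take a (u @ x # w) = take a (rev A)"
      unfolding E_def ins by blast
    obtain A' where A'1: "A = x#A' \<or> A = A'@[x]" and A'2: "peel v1 A'"
      using A(2) peel_Cons_ex by metis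
    have A'p: "A' \<in> perms C'" "x \<notin> set A'" "distinct A'"
      using A(1) A'1 x unfolding perms_def by auto
    have lA': "length A' = m" using perms_length[OF fin A'p(1)] cm by simp
    from A'1 show "(p = 0 \<and> E C' (a-1) v1 v2) \<or> (1 \<le> p \<and> (a \<le> p \<or> (a = Suc m \<and> p = m)) \<and> E C' p v1 v2)"
    proof
      assume Ax: "A = x # A'"
      have pe: "u = take p (rev A')" "peel v2 A'"
        using L1[OF A'p(2,3) xuw(1), of w] A(3) Ax lu uw by auto
      have cond: "a \<le> p \<or> (a = Suc m \<and> p = m)"
      proof (rule ccontr)
        assume nc: "\<not> (a \<le> p \<or> (a = Suc m \<and> p = m))"
        then have pa: "p < a" "p < m" using a p by auto
        have "take a (u @ x # w) ! p = x" using pa lu by (simp add: nth_append)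
        moreover have "take a (rev A) ! p = rev A' ! p" using pa Ax lA' by (simp add: nth_append)
        moreover have "rev A' ! p \<in> set A'" using pa lA' by (metis length_rev nth_mem set_rev)
        ultimately show False using A(4) A'p(2) by metis
      qed
      then have "1 \<le> p" using a m1 by auto
      moreover have "E C' p v1 v2" unfolding E_def using A'p(1) A'2 pe u_def by auto
      ultimately show ?thesis using cond by blast
    next
      assume Ax: "A = A' @ [x]"
      have "u = []"
      proof (rule ccontr)
        assume "u \<noteq> []"
        then have "take a (u @ x # w) ! 0 = hd u" using a by (simp add: nth_append hd_conv_nth)
        moreover have "take a (rev A) ! 0 = x" using a Ax by simp
        moreover have "hd u \<in> set u" using \<open>u \<noteq> []\<close> by simp
        ultimately show False using A(4) xuw(1) by metis
      qed
      then have p0: "p = 0" and wv: "w = v2" using lu uw by auto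
      have "peel v2 A'" using L2[OF A'p(2,3), of "[]" w] A(3) Ax \<open>u = []\<close> wv by simp
      moreover have "take (a-1) v2 = take (a-1) (rev A')"
        using A(4) Ax \<open>u = []\<close> wv a by (cases a) auto
      ultimately have "E C' (a-1) v1 v2" unfolding E_def using A'p(1) A'2 by auto
      then show ?thesis using p0 by blast
    qed
  next
    assume "(p = 0 \<and> E C' (a-1) v1 v2) \<or> (1 \<le> p \<and> (a \<le> p \<or> (a = Suc m \<and> p = m)) \<and> E C' p v1 v2)"
    then show "E (insert x C') a (x#v1) (ins p x v2)"
    proof
      assume H: "p = 0 \<and> E C' (a-1) v1 v2"
      then obtain A' where A': "A' \<in> perms C'" "peel v1 A'" "peel v2 A'" "take (a-1) v2 = take (a-1) (rev A')"
        unfolding E_def by blast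
      have A'x: "x \<notin> set A'" "distinct A'" using A' x unfolding perms_def by auto
      have "A' @ [x] \<in> perms (insert x C')" using A' A'x unfolding perms_def by auto
      moreover have "peel (x#v1) (A' @ [x])" using A'(2) peel_Cons_ex by metis
      moreover have "ins p x v2 = x # v2" using H unfolding ins_def by simp
      moreover have "peel (x # v2) (A' @ [x])" using L2[OF A'x, of "[]" v2] A'(3) by simp
      moreover have "take a (x # v2) = take a (rev (A' @ [x]))" using A'(4) a by (cases a) auto
      ultimately show ?thesis unfolding E_def by metis
    next
      assume H: "1 \<le> p \<and> (a \<le> p \<or> (a = Suc m \<and> p = m)) \<and> E C' p v1 v2"
      then obtain A' where A': "A' \<in> perms C'" "peel v1 A'" "peel v2 A'" "take p v2 = take p (rev A')"
        unfolding E_def by blast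
      have A'x: "x \<notin> set A'" "distinct A'" using A' x unfolding perms_def by auto
      have lA': "length A' = m" using perms_length[OF fin A'(1)] cm by simp
      have "x # A' \<in> perms (insert x C')" using A' A'x unfolding perms_def by auto
      moreover have "peel (x#v1) (x # A')" using A'(2) peel_Cons_ex by metis
      moreover have "peel (u @ x # w) (x # A')"
        using L1[OF A'x xuw(1), of w] A'(3,4) lu uw u_def by simp
      moreover have "take a (u @ x # w) = take a (rev (x # A'))"
      proof (cases "a \<le> p")
        case True
        have "take a (u @ x # w) = take a u" using True lu by simp
        also have "\<dots> = take a (rev A')" using A'(4) True unfolding u_def by (metis min.absorb1 take_take)
        also have "\<dots> = take a (rev (x # A'))" using True p lA' by simp
        finally show ?thesis .
      next
        case False
        then have am: "a = Suc m" "p = m" using H by auto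
        then have "u = v2" "w = []" using lv2 u_def w_def by auto
        then have "u @ x # w = rev (x # A')" using A'(4) am lA' lv2 by simp
        then show ?thesis by simp
      qed
      ultimately show ?thesis unfolding E_def ins by metis
    qed
  qed
qed

lemma finite_perms: "finite C \<Longrightarrow> finite (perms C)"
  by (rule finite_subset[OF _ finite_lists_length_eq[of C "card C"]]) (auto simp: perms_def distinct_card)

lemma ins_perm: "x \<notin> C' \<Longrightarrow> v \<in> perms C' \<Longrightarrow> ins p x v \<in> perms (insert x C')"
proof -
  assume "x \<notin> C'" "v \<in> perms C'"
  then have v: "distinct v" "set v = C'" "x \<notin> set v" unfolding perms_def by auto
  have d: "distinct (take p v @ drop p v)" using v(1) by simp
  then have dd: "set (take p v) \<inter> set (drop p v) = {}" "distinct (take p v)" "distinct (drop p v)"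
    unfolding distinct_append by blast+
  have st: "set (take p v) \<union> set (drop p v) = set v" by (metis set_append append_take_drop_id)
  have xt: "x \<notin> set (take p v)" "x \<notin> set (drop p v)" using v(3) by (auto dest: in_set_takeD in_set_dropD)
  show ?thesis unfolding perms_def ins_def using dd st xt v(2) by auto
qed

lemma count_step:
  assumes fin: "finite C" and cC: "card C = Suc m" and m1: "1 \<le> m" and a: "1 \<le> a" "a \<le> Suc m"
    and IH: "\<And>x k. x \<in> C \<Longrightarrow> k \<le> m \<Longrightarrow> card (PP (C - {x}) k) = fact m * Scl m k"
  shows "card (PP C a) = fact (Suc m) * Scl (Suc m) a"
proof -
  define cnd where "cnd p = (a \<le> p \<or> (a = Suc m \<and> p = m))" for p
  define Y where "Y x p = {(v1,v2). v1 \<in> perms (C-{x}) \<and> v2 \<in> perms (C-{x}) \<and>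
      ((p = 0 \<and> E (C-{x}) (a-1) v1 v2) \<or> (1 \<le> p \<and> cnd p \<and> E (C-{x}) p v1 v2))}" for x p
  define g where "g x p = (\<lambda>(v1,v2). (x#v1, ins p x v2))" for x :: 'a and p :: nat
  define G where "G xp = g (fst xp) (snd xp) ` Y (fst xp) (snd xp)" for xp :: "'a \<times> nat"
  have cx: "card (C - {x}) = m" "finite (C - {x})" "insert x (C - {x}) = C" if "x \<in> C" for x
    using that fin cC by auto
  have dec: "E C a (x#v1) (ins p x v2) \<longleftrightarrow> (p = 0 \<and> E (C-{x}) (a-1) v1 v2) \<or> (1 \<le> p \<and> cnd p \<and> E (C-{x}) p v1 v2)"
    if "x \<in> C" "v1 \<in> perms (C-{x})" "v2 \<in> perms (C-{x})" "p \<le> m" for x v1 v2 p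
    using Dec[of x "C-{x}" m a v1 v2 p] cx[OF that(1)] that m1 a unfolding cnd_def by auto
  have eq: "PP C a = (\<Union>xp\<in>(C \<times> {0..m}). G xp)"
  proof (intro set_eqI iffI)
    fix vv assume "vv \<in> PP C a"
    then obtain v1 v2 where vv: "vv = (v1,v2)" "v1 \<in> perms C" "v2 \<in> perms C" "E C a v1 v2"
      unfolding PP_def by auto
    have "C \<noteq> {}" using cC by auto
    then obtain x v1' where v1: "v1 = x # v1'" using vv(2) unfolding perms_def by (cases v1) auto
    have xC: "x \<in> C" and v1': "v1' \<in> perms (C - {x})" using vv(2) v1 unfolding perms_def by auto
    have "x \<in> set v2" using vv(3) xC unfolding perms_def by auto
    then obtain u w where v2: "v2 = u @ x # w" by (metis split_list)
    have v2': "u @ w \<in> perms (C - {x})" using vv(3) v2 unfolding perms_def by auto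
    have lm: "length u \<le> m" using perms_length[OF cx(2)[OF xC] v2'] cx(1)[OF xC] by simp
    have ins: "ins (length u) x (u @ w) = v2" unfolding ins_def v2 by simp
    have "(v1', u @ w) \<in> Y x (length u)"
      using dec[OF xC v1' v2' lm] vv(4) ins v1 v1' v2' unfolding Y_def by auto
    moreover have "vv = g x (length u) (v1', u @ w)" unfolding g_def using vv v1 ins by simp
    ultimately show "vv \<in> (\<Union>xp\<in>(C \<times> {0..m}). G xp)"
      unfolding G_def using xC lm by force
  next
    fix vv assume "vv \<in> (\<Union>xp\<in>(C \<times> {0..m}). G xp)"
    then obtain x p v1 v2 where H: "x \<in> C" "p \<le> m" "(v1,v2) \<in> Y x p" "vv = (x#v1, ins p x v2)"
      unfolding g_def G_def by auto
    have v: "v1 \<in> perms (C-{x})" "v2 \<in> perms (C-{x})" using H(3) unfolding Y_def by auto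
    have "x # v1 \<in> perms C" using v(1) H(1) unfolding perms_def by auto
    moreover have "ins p x v2 \<in> perms C" using ins_perm[of x "C-{x}" v2 p] v(2) cx(3)[OF H(1)] by simp
    moreover have "E C a (x#v1) (ins p x v2)" using dec[OF H(1) v H(2)] H(3) unfolding Y_def by auto
    ultimately show "vv \<in> PP C a" unfolding PP_def using H(4) by simp
  qed
  have finY: "finite (Y x p)" if "x \<in> C" for x p
    by (rule finite_subset[of _ "perms (C-{x}) \<times> perms (C-{x})"]) (auto simp: Y_def finite_perms fin)
  have injg: "inj_on (g x p) (Y x p)" if "x \<in> C" "p \<le> m" for x p
  proof (rule inj_onI)
    fix z1 z2 assume z: "z1 \<in> Y x p" "z2 \<in> Y x p" "g x p z1 = g x p z2"
    obtain a1 b1 a2 b2 where zz: "z1 = (a1,b1)" "z2 = (a2,b2)" by fastforce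
    have xb: "x \<notin> set b1" "x \<notin> set b2" using z(1,2) zz unfolding Y_def perms_def by auto
    have "a1 = a2" "take p b1 @ x # drop p b1 = take p b2 @ x # drop p b2"
      using z(3) zz unfolding g_def ins_def by auto
    then have "take p b1 = take p b2" "drop p b1 = drop p b2"
      using append_Cons_eq_iff[of x "take p b1" "drop p b1"] xb by (auto dest: in_set_takeD in_set_dropD)
    then show "z1 = z2" using zz \<open>a1 = a2\<close> by (metis append_take_drop_id)
  qed
  have disj: "G i \<inter> G j = {}"
    if "i \<in> C \<times> {0..m}" "j \<in> C \<times> {0..m}" "i \<noteq> j" for i j
  proof -
    obtain x p where i: "i = (x,p)" by fastforce
    obtain y q where j: "j = (y,q)" by fastforce
    have pm: "p \<le> m" "q \<le> m" "x \<in> C" using that i j by auto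
    show ?thesis
    proof (rule ccontr)
      assume "G i \<inter> G j \<noteq> {}"
      then obtain z where "z \<in> G i" "z \<in> G j" by blast
      then obtain z1 z2 where ij: "z1 \<in> Y x p" "z2 \<in> Y y q" "z = g x p z1" "z = g y q z2"
        unfolding G_def i j by auto
      obtain a1 b1 a2 b2 where zz: "z1 = (a1,b1)" "z2 = (a2,b2)" by fastforce
      have xy: "x = y" using ij(3,4) zz unfolding g_def by auto
      have bp: "b1 \<in> perms (C-{x})" "b2 \<in> perms (C-{x})" using ij(1,2) zz xy unfolding Y_def by auto
      have xb: "x \<notin> set b1" "x \<notin> set b2" using bp unfolding perms_def by auto
      have lb: "length b1 = m" "length b2 = m"
        using perms_length[OF cx(2)[OF pm(3)] bp(1)] perms_length[OF cx(2)[OF pm(3)] bp(2)] cx(1)[OF pm(3)]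
        by auto
      have "take p b1 @ x # drop p b1 = take q b2 @ x # drop q b2"
        using ij(3,4) zz xy unfolding g_def ins_def by auto
      then have "take p b1 = take q b2"
        using append_Cons_eq_iff[of x "take p b1" "drop p b1"] xb by (auto dest: in_set_takeD in_set_dropD)
      then have "length (take p b1) = length (take q b2)" by simp
      then have "p = q" using lb pm by simp
      then show False using that i j xy by simp
    qed
  qed
  have cY: "card (Y x p) = (if p = 0 then fact m * Scl m (a-1) else if cnd p then fact m * Scl m p else 0)"
    if "x \<in> C" "p \<le> m" for x p
  proof (cases "p = 0")
    case True
    then have "Y x p = PP (C-{x}) (a-1)" unfolding Y_def PP_def by auto
    then show ?thesis using IH[OF that(1), of "a-1"] a True by simp
  next
    case False
    show ?thesis
    proof (cases "cnd p")
      case True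
      then have "Y x p = PP (C-{x}) p" using False unfolding Y_def PP_def by auto
      then show ?thesis using IH[OF that] False True by simp
    next
      case F2: False
      then have "Y x p = {}" using False unfolding Y_def by auto
      then show ?thesis using False F2 by simp
    qed
  qed
  define h where "h p = (if p = 0 then fact m * Scl m (a-1) else if cnd p then fact m * Scl m p else 0)" for p
  have "card (PP C a) = (\<Sum>xp\<in>(C \<times> {0..m}). card (G xp))"
    unfolding eq by (rule card_UN_disjoint) (use fin finY disj in \<open>auto simp: G_def\<close>)
  also have "\<dots> = (\<Sum>xp\<in>(C \<times> {0..m}). h (snd xp))"
    by (rule sum.cong) (auto simp: G_def card_image injg cY h_def)
  also have "\<dots> = Suc m * (\<Sum>p\<in>{0..m}. h p)"
    using sum.cartesian_product[of "\<lambda>x p. h p" "{0..m}" C] cC by (simp add: split_def)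
  also have "(\<Sum>p\<in>{0..m}. h p) = h 0 + (\<Sum>p\<in>{1..m}. h p)"
    by (simp add: sum.atLeast_Suc_atMost)
  also have "\<dots> = fact m * (Scl m (a-1) + (\<Sum>p\<in>{1..m}. if cnd p then Scl m p else 0))"
    by (simp add: h_def sum_distrib_left algebra_simps if_distrib cong: if_cong)
  also have "Scl m (a-1) + (\<Sum>p\<in>{1..m}. if cnd p then Scl m p else 0) = Scl (Suc m) a"
    using Rec[OF m1 a] unfolding cnd_def by simp
  finally show ?thesis by (simp add: algebra_simps)
qed

definition P3 :: "nat list list" where
  "P3 = [[1,2,3],[1,3,2],[2,1,3],[2,3,1],[3,1,2],[3,2,1]]"

definition R3 :: "nat list list list" where
  "R3 = [[],
    [[1,2,3],[3,2,1]],
    [[1,3,2],[2,3,1]],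
    [[2,1,3],[3,1,2]],
    [[1,2,3],[1,3,2],[2,3,1],[3,2,1]],
    [[1,2,3],[2,1,3],[3,1,2],[3,2,1]],
    [[1,3,2],[2,1,3],[2,3,1],[3,1,2]]]"

definition P4 :: "nat list list" where
  "P4 = [[1,2,3,4],[1,2,4,3],[1,3,2,4],[1,3,4,2],[1,4,2,3],[1,4,3,2],[2,1,3,4],[2,1,4,3],[2,3,1,4],[2,3,4,1],[2,4,1,3],[2,4,3,1],[3,1,2,4],[3,1,4,2],[3,2,1,4],[3,2,4,1],[3,4,1,2],[3,4,2,1],[4,1,2,3],[4,1,3,2],[4,2,1,3],[4,2,3,1],[4,3,1,2],[4,3,2,1]]"

definition R4 :: "nat list list list" where
  "R4 = [[],
    [[1,2,3,4],[4,3,2,1]],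
    [[1,2,4,3],[3,4,2,1]],
    [[1,3,2,4],[4,2,3,1]],
    [[1,3,4,2],[2,4,3,1]],
    [[1,4,2,3],[3,2,4,1]],
    [[1,4,3,2],[2,3,4,1]],
    [[2,1,3,4],[4,3,1,2]],
    [[2,1,4,3],[3,4,1,2]],
    [[2,3,1,4],[4,1,3,2]],
    [[2,4,1,3],[3,1,4,2]],
    [[3,1,2,4],[4,2,1,3]],
    [[3,2,1,4],[4,1,2,3]],
    [[1,2,3,4],[1,3,2,4],[4,2,3,1],[4,3,2,1]],
    [[1,2,3,4],[1,4,3,2],[2,3,4,1],[4,3,2,1]],
    [[1,2,3,4],[3,2,1,4],[4,1,2,3],[4,3,2,1]],
    [[1,2,4,3],[1,3,4,2],[2,4,3,1],[3,4,2,1]],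
    [[1,2,4,3],[1,4,2,3],[3,2,4,1],[3,4,2,1]],
    [[1,2,4,3],[3,1,2,4],[3,4,2,1],[4,2,1,3]],
    [[1,3,2,4],[1,4,2,3],[3,2,4,1],[4,2,3,1]],
    [[1,3,2,4],[2,3,1,4],[4,1,3,2],[4,2,3,1]],
    [[1,3,4,2],[1,4,3,2],[2,3,4,1],[2,4,3,1]],
    [[1,3,4,2],[2,1,3,4],[2,4,3,1],[4,3,1,2]],
    [[1,4,2,3],[2,4,1,3],[3,1,4,2],[3,2,4,1]],
    [[1,4,3,2],[2,1,4,3],[2,3,4,1],[3,4,1,2]],
    [[2,1,3,4],[2,3,1,4],[4,1,3,2],[4,3,1,2]],
    [[2,1,3,4],[3,1,2,4],[4,2,1,3],[4,3,1,2]],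
    [[2,1,4,3],[2,4,1,3],[3,1,4,2],[3,4,1,2]],
    [[2,1,4,3],[3,2,1,4],[3,4,1,2],[4,1,2,3]],
    [[2,3,1,4],[2,4,1,3],[3,1,4,2],[4,1,3,2]],
    [[3,1,2,4],[3,2,1,4],[4,1,2,3],[4,2,1,3]],
    [[1,2,3,4],[1,2,4,3],[1,3,4,2],[1,4,3,2],[2,3,4,1],[2,4,3,1],[3,4,2,1],[4,3,2,1]],
    [[1,2,3,4],[1,3,2,4],[1,4,2,3],[1,4,3,2],[2,3,4,1],[3,2,4,1],[4,2,3,1],[4,3,2,1]],
    [[1,2,3,4],[1,3,2,4],[2,3,1,4],[3,2,1,4],[4,1,2,3],[4,1,3,2],[4,2,3,1],[4,3,2,1]],
    [[1,2,3,4],[2,1,3,4],[3,1,2,4],[3,2,1,4],[4,1,2,3],[4,2,1,3],[4,3,1,2],[4,3,2,1]],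
    [[1,2,4,3],[1,3,2,4],[1,3,4,2],[1,4,2,3],[2,4,3,1],[3,2,4,1],[3,4,2,1],[4,2,3,1]],
    [[1,2,4,3],[1,4,2,3],[2,4,1,3],[3,1,2,4],[3,1,4,2],[3,2,4,1],[3,4,2,1],[4,2,1,3]],
    [[1,2,4,3],[2,1,4,3],[3,1,2,4],[3,2,1,4],[3,4,1,2],[3,4,2,1],[4,1,2,3],[4,2,1,3]],
    [[1,3,2,4],[2,1,3,4],[2,3,1,4],[3,1,2,4],[4,1,3,2],[4,2,1,3],[4,2,3,1],[4,3,1,2]],
    [[1,3,4,2],[1,4,3,2],[2,1,3,4],[2,1,4,3],[2,3,4,1],[2,4,3,1],[3,4,1,2],[4,3,1,2]],
    [[1,3,4,2],[2,1,3,4],[2,3,1,4],[2,4,1,3],[2,4,3,1],[3,1,4,2],[4,1,3,2],[4,3,1,2]],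
    [[1,4,2,3],[2,1,4,3],[2,4,1,3],[3,1,4,2],[3,2,1,4],[3,2,4,1],[3,4,1,2],[4,1,2,3]],
    [[1,4,3,2],[2,1,4,3],[2,3,1,4],[2,3,4,1],[2,4,1,3],[3,1,4,2],[3,4,1,2],[4,1,3,2]]]"

definition a4 :: "nat \<Rightarrow> int" where "a4 k = (if k = 2 then 1 else if k = 4 then 2 else if k = 8 then 4 else 0)"
definition b4 :: "nat \<Rightarrow> int" where "b4 k = (if k = 4 then 1 else if k = 8 then 3 else 0)"
definition a3 :: "nat \<Rightarrow> int" where "a3 k = (if k = 2 then 1 else if k = 4 then 2 else 0)"
definition b3 :: "nat \<Rightarrow> int" where "b3 k = (if k = 4 then 1 else 0)"

lemma C4_check:
  "(\<forall>T\<in>set R4. a4 (length T) - b4 (length T) = (if T = [] then 0 else 1)) \<and>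
   (\<forall>T\<in>set R4. \<forall>v\<in>set P4. filter (peel v) T \<in> set R4) \<and>
   (\<forall>T\<in>set R4. (\<Sum>v\<leftarrow>P4. a4 (length (filter (peel v) T))) = 2 * 4 * a4 (length T)
                       \<and> (\<Sum>v\<leftarrow>P4. b4 (length (filter (peel v) T))) = 4 * b4 (length T)) \<and>
   (\<forall>v\<in>set P4. filter (peel v) P4 \<in> set R4 \<and> length (filter (peel v) P4) = 8) \<and> distinct P4
   \<and> length P4 = 24"
  by code_simp

lemma C3_check:
  "(\<forall>T\<in>set R3. a3 (length T) - b3 (length T) = (if T = [] then 0 else 1)) \<and>
   (\<forall>T\<in>set R3. \<forall>v\<in>set P3. filter (peel v) T \<in> set R3) \<and>
   (\<forall>T\<in>set R3. (\<Sum>v\<leftarrow>P3. a3 (length (filter (peel v) T))) = 2 * 2 * a3 (length T)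
                       \<and> (\<Sum>v\<leftarrow>P3. b3 (length (filter (peel v) T))) = 2 * b3 (length T)) \<and>
   (\<forall>v\<in>set P3. filter (peel v) P3 \<in> set R3 \<and> length (filter (peel v) P3) = 4) \<and> distinct P3
   \<and> length P3 = 6"
  by code_simp

lemma P4_perms: "set P4 = perms {1..4::nat}"
proof -
  have "{1..4::nat} = set [1,2,3,4]" by auto
  then have "perms {1..4::nat} = set (permutations_of_set_list (remdups [1,2,3,4::nat]))"
    by (simp only: perms_def permutations_of_list[symmetric] permutations_of_set_def conj_commute)
  also have "\<dots> = set P4" by code_simp
  finally show ?thesis by simp
qed

lemma P3_perms: "set P3 = perms {1..3::nat}"
proof -
  have "{1..3::nat} = set [1,2,3]" by auto
  then have "perms {1..3::nat} = set (permutations_of_set_list (remdups [1,2,3::nat]))"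
    by (simp only: perms_def permutations_of_list[symmetric] permutations_of_set_def conj_commute)
  also have "\<dots> = set P3" by code_simp
  finally show ?thesis by simp
qed

lemma cnt4: "cnt {1..4::nat} (Suc k) = 24 * 4^k * (2^(k+2) - 3)"
proof -
  note C = C4_check
  have cl: "\<forall>T\<in>set R4. int (F P4 T k) = a4 (length T) * (2*4)^k - b4 (length T) * 4^k"
    by (rule F_closed) (use C in auto)
  have "cnt {1..4::nat} (Suc k) = F P4 P4 (Suc k)" by (rule cnt_F[OF P4_perms])
  also have "\<dots> = (\<Sum>v\<leftarrow>P4. F P4 (filter (peel v) P4) k)" by (rule Fstep) (use C in auto)
  finally have "int (cnt {1..4::nat} (Suc k)) = (\<Sum>v\<leftarrow>P4. int (F P4 (filter (peel v) P4) k))"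
    by (simp add: sum_list_of_nat[symmetric] o_def)
  also have "\<dots> = (\<Sum>v\<leftarrow>P4. 4 * 8^k - 3 * 4^k)"
    using C cl by (intro arg_cong[where f=sum_list] map_cong) (auto simp: a4_def b4_def)
  also have "\<dots> = 24 * (4 * 8^k - 3 * 4^k)"
    using C by (simp add: sum_list_triv)
  also have "\<dots> = int (24 * 4^k * (2^(k+2) - 3))"
  proof -
    have h1: "(1::nat) \<le> 2^k" by simp
    have h2: "(2::nat)^(k+2) = 4 * 2^k" by (simp add: power_add)
    have "(3::nat) \<le> 2^(k+2)" using h1 h2 by linarith
    then have "int (24 * 4^k * (2^(k+2) - 3)) = 24 * 4^k * (2^(k+2) - 3)" by (simp add: of_nat_diff)
    also have "\<dots> = 24 * (4 * 8^k - 3 * 4^k)"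
    proof -
      have "(8::int)^k = 4^k * 2^k" by (simp flip: power_mult_distrib)
      then show ?thesis by (simp add: power_add algebra_simps)
    qed
    finally show ?thesis by simp
  qed
  finally show ?thesis by linarith
qed

lemma cnt3: "cnt {1..3::nat} (Suc k) = 6 * 2^k * (2^(k+1) - 1)"
proof -
  note C = C3_check
  have cl: "\<forall>T\<in>set R3. int (F P3 T k) = a3 (length T) * (2*2)^k - b3 (length T) * 2^k"
    by (rule F_closed) (use C in auto)
  have "cnt {1..3::nat} (Suc k) = F P3 P3 (Suc k)" by (rule cnt_F[OF P3_perms])
  also have "\<dots> = (\<Sum>v\<leftarrow>P3. F P3 (filter (peel v) P3) k)" by (rule Fstep) (use C in auto)
  finally have "int (cnt {1..3::nat} (Suc k)) = (\<Sum>v\<leftarrow>P3. int (F P3 (filter (peel v) P3) k))"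
    by (simp add: sum_list_of_nat[symmetric] o_def)
  also have "\<dots> = (\<Sum>v\<leftarrow>P3. 2 * 4^k - 2^k)"
    using C cl by (intro arg_cong[where f=sum_list] map_cong) (auto simp: a3_def b3_def)
  also have "\<dots> = 6 * (2 * 4^k - 2^k)"
    using C by (simp add: sum_list_triv)
  also have "\<dots> = int (6 * 2^k * (2^(k+1) - 1))"
  proof -
    have "(1::nat) \<le> 2^(k+1)" by simp
    then have "int (6 * 2^k * (2^(k+1) - 1)) = 6 * 2^k * (2^(k+1) - 1)" by (simp add: of_nat_diff)
    also have "\<dots> = 6 * (2 * 4^k - 2^k)"
    proof -
      have "(4::int)^k = 2^k * 2^k" by (simp flip: power_mult_distrib)
      then show ?thesis by (simp add: power_add algebra_simps)
    qed
    finally show ?thesis by simp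
  qed
  finally show ?thesis by linarith
qed

lemma E01:
  assumes "v1 \<in> perms C" "v2 \<in> perms C" "C \<noteq> {}"
  shows "E C 0 v1 v2 \<longleftrightarrow> E C 1 v1 v2"
proof
  assume "E C 0 v1 v2"
  then obtain A where A: "A \<in> perms C" "peel v1 A" "peel v2 A" unfolding E_def by blast
  obtain y v2' where v2: "v2 = y # v2'" using assms(2,3) unfolding perms_def by (cases v2) auto
  obtain A' where A': "A = y # A' \<or> A = A' @ [y]" using A(3) v2 peel_Cons_ex by metis
  then show "E C 1 v1 v2"
  proof
    assume Ay: "A = y # A'"
    have "rev A \<in> perms C" using A(1) unfolding perms_def by auto
    moreover have "peel v1 (rev A)" "peel v2 (rev A)" using A peel_rev by auto
    moreover have "take 1 v2 = take 1 (rev (rev A))" using Ay v2 by simp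
    ultimately show ?thesis unfolding E_def by blast
  next
    assume Ay: "A = A' @ [y]"
    then have "take 1 v2 = take 1 (rev A)" using v2 by simp
    then show ?thesis using A unfolding E_def by blast
  qed
next
  assume "E C 1 v1 v2"
  then show "E C 0 v1 v2" unfolding E_def by auto
qed

lemma perms_single: "perms {c} = {[c]}"
proof -
  have "xs = [c]" if "distinct xs" "set xs = {c}" for xs
  proof -
    have "length xs = 1" using that distinct_card by fastforce
    then obtain d where "xs = [d]" by (auto simp: length_Suc_conv)
    then show ?thesis using that by auto
  qed
  then show ?thesis unfolding perms_def by auto
qed

lemma TT_formula:
  "finite C \<Longrightarrow> card C = Suc m \<Longrightarrow> a \<le> Suc m \<Longrightarrow> card (PP C a) = fact (Suc m) * Scl (Suc m) a"
proof (induction m arbitrary: C a)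
  case 0
  then obtain c where C: "C = {c}" by (metis One_nat_def card_1_singletonE)
  have "peel [c] [c]" by simp
  then have "PP C a = {([c],[c])}" unfolding PP_def E_def C perms_single by auto
  moreover have "Scl 1 a = 1" using 0 by (cases a) (auto simp: Scl_def H_def)
  ultimately show ?case by simp
next
  case (Suc m)
  have step: "card (PP C b) = fact (Suc (Suc m)) * Scl (Suc (Suc m)) b" if "1 \<le> b" "b \<le> Suc (Suc m)" for b
  proof (rule count_step[OF Suc.prems(1,2)])
    show "1 \<le> Suc m" by simp
    show "1 \<le> b" "b \<le> Suc (Suc m)" by fact+
    fix x k assume "x \<in> C" "k \<le> Suc m"
    then show "card (PP (C - {x}) k) = fact (Suc m) * Scl (Suc m) k"
      using Suc.IH[of "C - {x}" k] Suc.prems by auto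
  qed
  show ?case
  proof (cases "a = 0")
    case True
    have "C \<noteq> {}" using Suc.prems by auto
    then have "PP C 0 = PP C 1" unfolding PP_def using E01 by blast
    then show ?thesis using step[of 1] True Scl01[of "Suc (Suc m)"] by simp
  next
    case False
    then show ?thesis using step[of a] Suc.prems by simp
  qed
qed

lemma cnt2: "cnt C 2 = card (PP C 0)"
proof -
  have "{Ps. length Ps = 2 \<and> set Ps \<subseteq> perms C \<and> (\<exists>A\<in>perms C. \<forall>v\<in>set Ps. peel v A)}
        = (\<lambda>(v1,v2). [v1,v2]) ` PP C 0"
  proof (intro set_eqI iffI)
    fix Ps assume "Ps \<in> {Ps. length Ps = 2 \<and> set Ps \<subseteq> perms C \<and> (\<exists>A\<in>perms C. \<forall>v\<in>set Ps. peel v A)}"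
    then have H: "length Ps = 2" "set Ps \<subseteq> perms C" "\<exists>A\<in>perms C. \<forall>v\<in>set Ps. peel v A" by auto
    obtain v1 v2 where Ps: "Ps = [v1,v2]" using H(1) by (auto simp: numeral_eq_Suc length_Suc_conv)
    then show "Ps \<in> (\<lambda>(v1,v2). [v1,v2]) ` PP C 0" using H unfolding PP_def E_def by force
  next
    fix Ps assume "Ps \<in> (\<lambda>(v1,v2). [v1,v2]) ` PP C 0"
    then show "Ps \<in> {Ps. length Ps = 2 \<and> set Ps \<subseteq> perms C \<and> (\<exists>A\<in>perms C. \<forall>v\<in>set Ps. peel v A)}"
      unfolding PP_def E_def by auto
  qed
  moreover have "inj_on (\<lambda>(v1,v2). [v1,v2]) (PP C 0)" by (auto simp: inj_on_def)
  ultimately show ?thesis unfolding cnt_def by (simp add: card_image)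
qed

theorem mainTheorem8:
  shows "(\<forall>m::nat. m \<ge> 1 \<longrightarrow> a_sp 2 m = fact m * ((2*m - 2) choose (m - 1)))
       \<and> (\<forall>n::nat. n \<ge> 1 \<longrightarrow> a_sp n 3 = 6 * 2^(n-1) * (2^n - 1))
       \<and> (\<forall>n::nat. n \<ge> 1 \<longrightarrow> a_sp n 4 = 24 * 4^(n-1) * (2^(n+1) - 3))"
proof (intro conjI allI impI)
  fix m :: nat assume m: "m \<ge> 1"
  then obtain k where k: "m = Suc k" by (cases m) auto
  have "a_sp 2 m = cnt {1..m} 2" unfolding a_sp_def by (rule bridge) simp
  also have "\<dots> = card (PP {1..m} 0)" by (rule cnt2)
  also have "\<dots> = fact m * Scl m 0" using TT_formula[of "{1..m}" k 0] k by simp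
  also have "\<dots> = fact m * ((2*m - 2) choose (m - 1))" using Scl0[OF m] by simp
  finally show "a_sp 2 m = fact m * ((2*m - 2) choose (m - 1))" .
next
  fix n :: nat assume n: "n \<ge> 1"
  then obtain k where k: "n = Suc k" by (cases n) auto
  have "a_sp n 3 = cnt {1..3::nat} n" unfolding a_sp_def by (rule bridge) simp
  also have "\<dots> = 6 * 2^k * (2^(k+1) - 1)" using cnt3[of k] k by simp
  finally show "a_sp n 3 = 6 * 2^(n-1) * (2^n - 1)" using k by simp
next
  fix n :: nat assume n: "n \<ge> 1"
  then obtain k where k: "n = Suc k" by (cases n) auto
  have "a_sp n 4 = cnt {1..4::nat} n" unfolding a_sp_def by (rule bridge) simp
  also have "\<dots> = 24 * 4^k * (2^(k+2) - 3)" using cnt4[of k] k by simp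
  finally show "a_sp n 4 = 24 * 4^(n-1) * (2^(n+1) - 3)" using k by simp
qed

end
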